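(* Let $m,n\ge1$ and let $A\in\{0,1\}^{m\times n}$ have exactly three ones in each row. Each of the following four subsets of $\mathrm{NPadj}(A)$ is the vertex set of a face of $\operatorname{conv}(\mathrm{NPadj}(A))$, and its convex hull is affinely equivalent to $\operatorname{conv}(\mathrm{Part}(A))$: - $F_1=\{x\in\mathrm{NPadj}(A): y_1=0,y_2=1,y_3=1\}$; - $F_2=\{x\in\mathrm{NPadj}(A): y_1=1,y_2=0,y_3=1\}$; - $F_3=\{x\in\mathrm{NPadj}(A): y_1=0,y_2=1,y_3=0\}$; - $F_4=\{x\in\mathrm{NPadj}(A): y_1=1,y_2=0,y_3=0\}$. In particular, $\mathrm{Part}(A)\le_a\mathrm{NPadj}(A)$.
   Context: **Definition of $\mathrm{NPadj}(A)$.** Let $m,n\ge1$ and let $A\in\{0,1\}^{m\times n}$ have exactly three ones in each row. Index the coordinates of $\mathbb{R}^{3n+3}$ by $y_1,y_2,y_3$ and by $x_j,\bar x_j,x'_j$ for $j\in[n]=\{1,\dots,n\}$. Then $\mathrm{NPadj}(A)$ is the set of vectors in $\{0,1\}^{3n+3}$ satisfying: - $x_j+\bar x_j=1$ for all $j\in[n]$; - $y_1+y_2+x'_j+\bar x_j=2$ for all $j\in[n]$; - for each row of $A$, with ones in columns $i<j<k$, the equation $y_3+x_i+x'_j+x'_k=2$. **Partition polytope.** $\mathrm{Part}(A)=\{z\in\{0,1\}^n: Az=\mathbf 1\}$. **Affine reduction of polytopes.** For finite sets $P,Q$ of 0/1 vectors, $P\le_a Q$ means: there is an affine map $\alpha$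 on $\operatorname{conv}(P)$, injective there, such that $\alpha(\operatorname{conv}(P))$ is a face (possibly improper) of $\operatorname{conv}(Q)$. *)

theory Defs
  imports "HOL-Analysis.Analysis"
begin

text \<open>Coordinates of the ambient space of NPadj(A): y1,y2,y3 and x_j, xbar_j, x'_j
  for each column j.  With n = CARD('c) this is a set of 3n+3 coordinates.\<close>
datatype 'c coord = Y1 | Y2 | Y3 | X 'c | Xbar 'c | Xp 'c

lemma UNIV_coord: "(UNIV :: 'c coord set) =
   {Y1, Y2, Y3} \<union> range X \<union> range Xbar \<union> range Xp"
  by (auto intro: coord.exhaust)

instance coord :: (finite) finite
  by standard (simp add: UNIV_coord)

definition Part :: "real ^ 'c ^ 'r \<Rightarrow> (real ^ 'c) set" where
  "Part A = {z. (\<forall>j. z $ j \<in> {0, 1}) \<and> A *v z = 1}"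

definition NPadj :: "real ^ ('c::{finite,linorder}) ^ 'r \<Rightarrow> (real ^ 'c coord) set" where
  "NPadj A = {v. (\<forall>k. v $ k \<in> {0, 1})
      \<and> (\<forall>j. v $ X j + v $ Xbar j = 1)
      \<and> (\<forall>j. v $ Y1 + v $ Y2 + v $ Xp j + v $ Xbar j = 2)
      \<and> (\<forall>r i j k. i < j \<and> j < k \<and> A $ r $ i = 1 \<and> A $ r $ j = 1 \<and> A $ r $ k = 1
            \<longrightarrow> v $ Y3 + v $ X i + v $ Xp j + v $ Xp k = 2)}"

definition NPadj_sub :: "real ^ ('c::{finite,linorder}) ^ 'r \<Rightarrow> real \<Rightarrow> real \<Rightarrow> real \<Rightarrow> (real ^ 'c coord) set" where
  "NPadj_sub A a b c = {v \<in> NPadj A. v $ Y1 = a \<and> v $ Y2 = b \<and> v $ Y3 = c}"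

definition affine_map :: "('a::real_vector \<Rightarrow> 'b::real_vector) \<Rightarrow> bool" where
  "affine_map f \<longleftrightarrow> (\<exists>L b. linear L \<and> (\<forall>x. f x = L x + b))"

definition aff_equiv :: "'a::real_vector set \<Rightarrow> 'b::real_vector set \<Rightarrow> bool" where
  "aff_equiv S T \<longleftrightarrow> (\<exists>f. affine_map f \<and> inj_on f S \<and> f ` S = T)"

definition aff_reduces :: "'a::real_vector set \<Rightarrow> 'b::real_vector set \<Rightarrow> bool" where
  "aff_reduces P Q \<longleftrightarrow> (\<exists>\<alpha>. affine_map \<alpha> \<and> inj_on \<alpha> (convex hull P)
       \<and> (\<alpha> ` (convex hull P)) face_of (convex hull Q))"

end

theory Submission
  imports Defs
begin

definition phi :: "real \<Rightarrow> real \<Rightarrow> real" where "phi c s = (1 - c) + (2*c - 1) * s"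

lemma phi_invol: "c \<in> {0,1} \<Longrightarrow> phi c (phi c s) = s"
  by (auto simp: phi_def algebra_simps)

definition emb :: "real \<Rightarrow> real \<Rightarrow> real \<Rightarrow> real^'c \<Rightarrow> real^'c coord" where
 "emb a b c z = (\<chi> k. case k of Y1 \<Rightarrow> a | Y2 \<Rightarrow> b | Y3 \<Rightarrow> c | X j \<Rightarrow> phi c (z$j)
      | Xbar j \<Rightarrow> 1 - phi c (z$j) | Xp j \<Rightarrow> phi c (z$j))"

definition proj :: "real \<Rightarrow> real^'c coord \<Rightarrow> real^'c" where
 "proj c v = (\<chi> j. phi c (v $ X j))"

lemma emb_affine: "affine_map (emb a b c :: real^'c \<Rightarrow> real^'c coord)"
proof -
  define L :: "real^'c \<Rightarrow> real^'c coord" where "L = (\<lambda>z. (\<chi> k. case k of X j \<Rightarrow> (2*c-1) * z$j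
      | Xbar j \<Rightarrow> - ((2*c-1) * z$j) | Xp j \<Rightarrow> (2*c-1) * z$j | _ \<Rightarrow> 0))"
  define b0 :: "real^'c coord" where "b0 = (\<chi> k. case k of Y1 \<Rightarrow> a | Y2 \<Rightarrow> b | Y3 \<Rightarrow> c | X j \<Rightarrow> 1 - c
      | Xbar j \<Rightarrow> c | Xp j \<Rightarrow> 1 - c)"
  have "linear L"
  proof (rule linearI)
    fix x y :: "real^'c"
    have "L (x + y) $ k = (L x + L y) $ k" for k
      by (cases k) (simp_all add: L_def algebra_simps)
    then show "L (x + y) = L x + L y" by (simp add: vec_eq_iff)
  next
    fix r :: real and x :: "real^'c"
    have "L (r *\<^sub>R x) $ k = (r *\<^sub>R L x) $ k" for k
      by (cases k) (simp_all add: L_def algebra_simps)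
    then show "L (r *\<^sub>R x) = r *\<^sub>R L x" by (simp add: vec_eq_iff)
  qed
  moreover have "\<forall>z. emb a b c z = L z + b0"
  proof
    fix z :: "real^'c"
    have "emb a b c z $ k = (L z + b0) $ k" for k
      by (cases k) (simp_all add: emb_def L_def b0_def phi_def algebra_simps)
    then show "emb a b c z = L z + b0" by (simp add: vec_eq_iff)
  qed
  ultimately show ?thesis unfolding affine_map_def by blast
qed

lemma proj_affine: "affine_map (proj c :: real^'c coord \<Rightarrow> real^'c)"
proof -
  define L :: "real^'c coord \<Rightarrow> real^'c" where "L = (\<lambda>v. (\<chi> j. (2*c-1) * v$X j))"
  define b0 :: "real^'c" where "b0 = (\<chi> j. 1 - c)"
  have "linear L"
    by (rule linearI) (simp_all add: L_def vec_eq_iff algebra_simps)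
  moreover have "\<forall>z. proj c z = L z + b0"
    by (simp add: vec_eq_iff proj_def L_def b0_def phi_def algebra_simps)
  ultimately show ?thesis unfolding affine_map_def by blast
qed

lemma affine_map_comb:
  assumes "affine_map f"
  shows "f ((1-u) *\<^sub>R x + u *\<^sub>R y) = (1-u) *\<^sub>R f x + u *\<^sub>R f y"
proof -
  obtain L b0 where L: "linear L" "\<forall>x. f x = L x + b0" using assms unfolding affine_map_def by blast
  have "f ((1-u) *\<^sub>R x + u *\<^sub>R y) = (1-u) *\<^sub>R L x + u *\<^sub>R L y + b0"
    using L by (simp add: linear_add linear_scale)
  also have "\<dots> = (1-u) *\<^sub>R (L x + b0) + u *\<^sub>R (L y + b0)"
    by (simp add: algebra_simps)
  finally show ?thesis using L by simp
qed

lemma affine_map_image_hull: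
  assumes "affine_map f" shows "f ` (convex hull S) = convex hull (f ` S)"
proof -
  obtain L b0 where L: "linear L" "\<forall>x. f x = L x + b0" using assms unfolding affine_map_def by blast
  have fe: "f = (\<lambda>x. b0 + x) \<circ> L" using L by (auto simp: fun_eq_iff add.commute)
  show ?thesis unfolding fe image_comp[symmetric]
    by (simp add: convex_hull_translation convex_hull_linear_image[OF L(1)])
qed

lemma inj_on_hull:
  assumes f: "affine_map f" and g: "affine_map g" and gf: "\<forall>x\<in>S. g (f x) = x"
  shows "inj_on f (convex hull S)"
proof -
  have "convex {x. g (f x) = x}"
    unfolding convex_alt
  proof (intro ballI allI impI)
    fix x y u assume x: "x \<in> {x. g (f x) = x}" and y: "y \<in> {x. g (f x) = x}"
    have "g (f ((1 - u) *\<^sub>R x + u *\<^sub>R y)) = g ((1 - u) *\<^sub>R f x + u *\<^sub>R f y)"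
      by (simp only: affine_map_comb[OF f])
    also have "\<dots> = (1 - u) *\<^sub>R g (f x) + u *\<^sub>R g (f y)"
      by (rule affine_map_comb[OF g])
    also have "\<dots> = (1 - u) *\<^sub>R x + u *\<^sub>R y" using x y by simp
    finally show "(1 - u) *\<^sub>R x + u *\<^sub>R y \<in> {x. g (f x) = x}" by simp
  qed
  then have "convex hull S \<subseteq> {x. g (f x) = x}"
    using gf by (intro hull_minimal) auto
  then have sub: "\<And>x. x \<in> convex hull S \<Longrightarrow> g (f x) = x" by blast
  show ?thesis unfolding inj_on_def
  proof (intro ballI impI)
    fix x y assume "x \<in> convex hull S" "y \<in> convex hull S" "f x = f y"
    then show "x = y" using sub by metis
  qed
qed

lemma finite_01: "finite {v :: real^'n::finite. \<forall>k. v$k \<in> {0,1}}"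
proof -
  have "{v :: real^'n. \<forall>k. v$k \<in> {0,1}} \<subseteq> vec_lambda ` (PiE UNIV (\<lambda>_. {0,1::real}))"
  proof
    fix v :: "real^'n" assume "v \<in> {v. \<forall>k. v$k \<in> {0,1}}"
    then have "vec_nth v \<in> PiE UNIV (\<lambda>_. {0,1::real})" by (auto simp: PiE_iff)
    then show "v \<in> vec_lambda ` (PiE UNIV (\<lambda>_. {0,1::real}))"
      by (metis image_eqI vec_nth_inverse)
  qed
  moreover have "finite (PiE (UNIV::'n set) (\<lambda>_. {0,1::real}))"
    by (rule finite_PiE) auto
  ultimately show ?thesis by (metis finite_imageI finite_subset)
qed

lemma hull_hyperplane:
  fixes S :: "'a::euclidean_space set"
  assumes fin: "finite S" and le: "\<forall>s\<in>S. inner d s \<le> \<beta>"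
  shows "convex hull S \<inter> {x. inner d x = \<beta>} = convex hull {s\<in>S. inner d s = \<beta>}"
proof
  let ?T = "{s\<in>S. inner d s = \<beta>}"
  have "convex hull ?T \<subseteq> {x. inner d x = \<beta>}"
    by (intro hull_minimal) (auto simp: convex_hyperplane)
  moreover have "convex hull ?T \<subseteq> convex hull S" by (intro hull_mono) auto
  ultimately show "convex hull ?T \<subseteq> convex hull S \<inter> {x. inner d x = \<beta>}" by blast
next
  let ?T = "{s\<in>S. inner d s = \<beta>}"
  show "convex hull S \<inter> {x. inner d x = \<beta>} \<subseteq> convex hull ?T"
  proof
    fix x assume "x \<in> convex hull S \<inter> {x. inner d x = \<beta>}"
    then obtain u where u0: "\<forall>s\<in>S. 0 \<le> u s" and u1: "sum u S = 1"
      and ux: "(\<Sum>s\<in>S. u s *\<^sub>R s) = x" and hx: "inner d x = \<beta>"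
      using fin by (auto simp: convex_hull_finite)
    have ix: "inner d x = (\<Sum>s\<in>S. u s * inner d s)" using ux[symmetric] by (simp add: inner_sum_right)
    have "(\<Sum>s\<in>S. u s * (\<beta> - inner d s)) = (\<Sum>s\<in>S. u s * \<beta>) - (\<Sum>s\<in>S. u s * inner d s)"
      by (simp add: right_diff_distrib sum_subtractf)
    also have "\<dots> = 0" using hx u1 ix by (simp add: sum_distrib_right[symmetric])
    finally have h1: "(\<Sum>s\<in>S. u s * (\<beta> - inner d s)) = 0" .
    have h2: "\<And>s. s \<in> S \<Longrightarrow> 0 \<le> u s * (\<beta> - inner d s)"
      using u0 le by (simp add: mult_nonneg_nonneg)
    have "\<forall>s\<in>S. u s * (\<beta> - inner d s) = 0"
      using sum_nonneg_eq_0_iff[OF fin, of "\<lambda>s. u s * (\<beta> - inner d s)"] h1 h2 by blast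
    then have zero: "\<forall>s\<in>S. inner d s \<noteq> \<beta> \<longrightarrow> u s = 0" by auto
    have finT: "finite ?T" using fin by simp
    have s1: "sum u ?T = sum u S" by (rule sum.mono_neutral_left) (use fin zero in auto)
    have s2: "(\<Sum>s\<in>?T. u s *\<^sub>R s) = (\<Sum>s\<in>S. u s *\<^sub>R s)"
      by (rule sum.mono_neutral_left) (use fin zero in auto)
    have "(\<forall>s\<in>?T. 0 \<le> u s) \<and> sum u ?T = 1 \<and> (\<Sum>s\<in>?T. u s *\<^sub>R s) = x"
      using u0 u1 ux s1 s2 by simp
    then show "x \<in> convex hull ?T" unfolding convex_hull_finite[OF finT] by blast
  qed
qed

lemma face_hyperplane:
  fixes S :: "'a::euclidean_space set"
  assumes fin: "finite S" and le: "\<forall>s\<in>S. inner d s \<le> \<beta>"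
  shows "convex hull {s\<in>S. inner d s = \<beta>} face_of convex hull S"
proof -
  have "convex hull S \<subseteq> {x. inner d x \<le> \<beta>}"
    using le by (intro hull_minimal) (auto simp: convex_halfspace_le)
  then have "convex hull S \<inter> {x. inner d x = \<beta>} face_of convex hull S"
    by (intro face_of_Int_supporting_hyperplane_le) auto
  then show ?thesis using hull_hyperplane[OF assms] by simp
qed

lemma extreme_01:
  fixes S :: "(real^'n::finite) set"
  assumes fin: "finite S" and S01: "\<forall>v\<in>S. \<forall>k. v$k \<in> {0,1}"
  shows "{v. v extreme_point_of convex hull S} = S"
proof
  show "{v. v extreme_point_of convex hull S} \<subseteq> S" using extreme_point_of_convex_hull by blast
next
  show "S \<subseteq> {v. v extreme_point_of convex hull S}"
  proof
    fix v assume vS: "v \<in> S"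
    define d :: "real^'n" where "d = (\<chi> k. 2 * v$k - 1)"
    have key: "inner d w \<le> inner d v \<and> (inner d w = inner d v \<longrightarrow> w = v)" if wS: "w \<in> S" for w
    proof -
      have diff: "inner d v - inner d w = (\<Sum>k\<in>UNIV. (2 * v$k - 1) * (v$k - w$k))"
        by (simp add: d_def inner_vec_def sum_subtractf[symmetric] algebra_simps)
      have nn: "\<forall>k\<in>UNIV. 0 \<le> (2 * v$k - 1) * (v$k - w$k)"
      proof
        fix k
        have "v$k \<in> {0,1}" "w$k \<in> {0,1}" using S01 vS wS by auto
        then show "0 \<le> (2 * v$k - 1) * (v$k - w$k)" by auto
      qed
      have "0 \<le> inner d v - inner d w" unfolding diff using nn by (intro sum_nonneg) auto
      moreover have "w = v" if eq: "inner d w = inner d v"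
      proof (rule ccontr)
        assume "w \<noteq> v"
        then obtain k where k: "w$k \<noteq> v$k" by (auto simp: vec_eq_iff)
        moreover have "v$k \<in> {0,1}" "w$k \<in> {0,1}" using S01 vS wS by auto
        ultimately have "(2 * v$k - 1) * (v$k - w$k) = 1" by auto
        then have "1 \<le> (\<Sum>k\<in>UNIV. (2 * v$k - 1) * (v$k - w$k))"
          using member_le_sum[of k UNIV "\<lambda>k. (2 * v$k - 1) * (v$k - w$k)"] nn by auto
        then show False using diff eq by simp
      qed
      ultimately show ?thesis by auto
    qed
    have "{s\<in>S. inner d s = inner d v} = {v}" using key vS by auto
    then have "convex hull {v} face_of convex hull S"
      using face_hyperplane[OF fin, of d "inner d v"] key by auto
    then show "v \<in> {v. v extreme_point_of convex hull S}"
      by (simp add: face_of_singleton)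
  qed
qed

lemma three_sorted:
  fixes S :: "'c::linorder set"
  assumes "card S = 3"
  obtains i j k where "i < j" "j < k" "S = {i,j,k}"
proof -
  have fin: "finite S" using assms by (metis card.infinite zero_neq_numeral)
  define l where "l = sorted_list_of_set S"
  have len: "length l = 3" using assms fin by (simp add: l_def)
  then obtain i j k where l3: "l = [i,j,k]"
    by (metis (no_types) length_0_conv length_Suc_conv numeral_3_eq_3)
  have "sorted_wrt (<) l" unfolding l_def by (rule strict_sorted_list_of_set)
  hence "i < j" "j < k" using l3 by auto
  moreover have "S = {i,j,k}"
  proof -
    have "set l = S" using fin by (simp add: l_def)
    then show ?thesis using l3 by auto
  qed
  ultimately show ?thesis using that by blast
qed

lemma row_iff:
  fixes S :: "'c::linorder set" and x :: "'c \<Rightarrow> real"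
  assumes "card S = 3"
  shows "(\<forall>i j k. i < j \<and> j < k \<and> i \<in> S \<and> j \<in> S \<and> k \<in> S \<longrightarrow> x i + x j + x k = s)
     \<longleftrightarrow> sum x S = s"
proof -
  obtain i j k where ijk: "i<j" "j<k" "S={i,j,k}" using three_sorted[OF assms] by blast
  have ne: "i \<noteq> j" "i \<noteq> k" "j \<noteq> k" using ijk by auto
  have sumS: "sum x S = x i + x j + x k" using ijk ne by (simp add: add.assoc)
  show ?thesis
  proof
    assume "\<forall>i j k. i < j \<and> j < k \<and> i \<in> S \<and> j \<in> S \<and> k \<in> S \<longrightarrow> x i + x j + x k = s"
    then show "sum x S = s" using ijk sumS by auto
  next
    assume h: "sum x S = s"
    show "\<forall>i j k. i < j \<and> j < k \<and> i \<in> S \<and> j \<in> S \<and> k \<in> S \<longrightarrow> x i + x j + x k = s"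
    proof (intro allI impI)
      fix i' j' k' assume H: "i' < j' \<and> j' < k' \<and> i' \<in> S \<and> j' \<in> S \<and> k' \<in> S"
      then have "i' = i \<and> j' = j \<and> k' = k" using ijk by auto
      then show "x i' + x j' + x k' = s" using h sumS by simp
    qed
  qed
qed

lemma Part_iff:
  assumes zero_one: "\<forall>i j. A $ i $ j \<in> {0, 1}"
  shows "z \<in> Part A \<longleftrightarrow> (\<forall>j. z$j \<in> {0,1}) \<and> (\<forall>r. sum (\<lambda>j. z$j) {j. A$r$j = 1} = 1)"
proof -
  have eq: "(A *v z) $ r = sum (\<lambda>j. z$j) {j. A$r$j = 1}" for r
  proof -
    have "(A *v z) $ r = (\<Sum>j\<in>UNIV. A$r$j * z$j)" by (simp add: matrix_vector_mult_def)
    also have "\<dots> = (\<Sum>j\<in>UNIV. if A$r$j = 1 then z$j else 0)"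
      by (rule sum.cong) (use zero_one in auto)
    also have "\<dots> = sum (\<lambda>j. z$j) {j. A$r$j = 1}" by (simp add: sum.If_cases)
    finally show ?thesis .
  qed
  show ?thesis unfolding Part_def using eq by (auto simp: vec_eq_iff)
qed


lemma sum_phi:
  assumes "card S = 3"
  shows "sum (\<lambda>j. phi c (x j)) S = 3*(1-c) + (2*c-1) * sum x S"
  using assms by (simp add: phi_def sum.distrib sum_distrib_left[symmetric])

lemma proj_emb: "c \<in> {0,1} \<Longrightarrow> proj c (emb a b c z) = z"
  by (simp add: vec_eq_iff proj_def emb_def phi_invol)

lemma emb_in:
  fixes A :: "real ^ ('c::{finite,linorder}) ^ ('r::finite)"
  assumes zero_one: "\<forall>i j. A $ i $ j \<in> {0, 1}"
    and three_ones: "\<forall>i. card {j. A $ i $ j = 1} = 3"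
    and abc: "a \<in> {0,1}" "b = 1 - a" "c \<in> {0,1}"
    and z: "z \<in> Part A"
  shows "emb a b c z \<in> NPadj_sub A a b c"
proof -
  have z01: "\<forall>j. z$j \<in> {0,1}" and zs: "\<forall>r. sum (\<lambda>j. z$j) {j. A$r$j = 1} = 1"
    using z Part_iff[OF zero_one] by auto
  have p01: "phi c (z$j) \<in> {0,1}" for j using z01[rule_format, of j] abc(3) by (auto simp: phi_def)
  have rows: "sum (\<lambda>j. phi c (z$j)) {j. A$r$j = 1} = 2 - c" for r
    using sum_phi[OF three_ones[rule_format, of r], of c "\<lambda>j. z$j"] zs by simp
  have rows': "\<forall>i j k. i < j \<and> j < k \<and> i \<in> {j. A$r$j = 1} \<and> j \<in> {j. A$r$j = 1} \<and> k \<in> {j. A$r$j = 1}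
      \<longrightarrow> phi c (z$i) + phi c (z$j) + phi c (z$k) = 2 - c" for r
    using row_iff[OF three_ones[rule_format, of r], of "\<lambda>j. phi c (z$j)" "2-c"] rows by blast
  have c01: "\<forall>k. emb a b c z $ k \<in> {0,1}"
  proof
    fix k show "emb a b c z $ k \<in> {0,1}"
      using p01 abc by (cases k) (auto simp: emb_def)
  qed
  have r3: "emb a b c z $ Y3 + emb a b c z $ X i + emb a b c z $ Xp j + emb a b c z $ Xp k = 2"
    if "i < j" "j < k" "A $ r $ i = 1" "A $ r $ j = 1" "A $ r $ k = 1" for r i j k
  proof -
    have "phi c (z$i) + phi c (z$j) + phi c (z$k) = 2 - c" using rows'[of r] that by auto
    then show ?thesis by (simp add: emb_def)
  qed
  show ?thesis
    unfolding NPadj_sub_def NPadj_def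
    using c01 r3 abc by (auto simp: emb_def)
qed

lemma proj_in:
  fixes A :: "real ^ ('c::{finite,linorder}) ^ ('r::finite)"
  assumes zero_one: "\<forall>i j. A $ i $ j \<in> {0, 1}"
    and three_ones: "\<forall>i. card {j. A $ i $ j = 1} = 3"
    and abc: "a \<in> {0,1}" "b = 1 - a" "c \<in> {0,1}"
    and v: "v \<in> NPadj_sub A a b c"
  shows "proj c v \<in> Part A \<and> emb a b c (proj c v) = v"
proof -
  from v have v01: "\<forall>k. v$k \<in> {0,1}" and xb: "\<forall>j. v$X j + v$Xbar j = 1"
    and xp: "\<forall>j. v$Y1 + v$Y2 + v$Xp j + v$Xbar j = 2"
    and rw: "\<forall>r i j k. i < j \<and> j < k \<and> A $ r $ i = 1 \<and> A $ r $ j = 1 \<and> A $ r $ k = 1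
            \<longrightarrow> v $ Y3 + v $ X i + v $ Xp j + v $ Xp k = 2"
    and y: "v$Y1 = a" "v$Y2 = b" "v$Y3 = c"
    unfolding NPadj_sub_def NPadj_def by auto
  have xpe: "v$Xp j = v$X j" for j
    using xb[rule_format, of j] xp[rule_format, of j] y abc(2) by linarith
  have xbe: "v$Xbar j = 1 - v$X j" for j
    using xb[rule_format, of j] by linarith
  have rs: "sum (\<lambda>j. v$X j) {j. A$r$j = 1} = 2 - c" for r
  proof -
    have "\<forall>i j k. i < j \<and> j < k \<and> i \<in> {j. A$r$j = 1} \<and> j \<in> {j. A$r$j = 1} \<and> k \<in> {j. A$r$j = 1}
        \<longrightarrow> v$X i + v$X j + v$X k = 2 - c"
    proof (intro allI impI)
      fix i j k assume "i < j \<and> j < k \<and> i \<in> {j. A$r$j = 1} \<and> j \<in> {j. A$r$j = 1} \<and> k \<in> {j. A$r$j = 1}"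
      then have "v $ Y3 + v $ X i + v $ Xp j + v $ Xp k = 2" using rw by auto
      then show "v$X i + v$X j + v$X k = 2 - c" using y xpe by simp
    qed
    then show ?thesis using row_iff[OF three_ones[rule_format, of r]] by blast
  qed
  have "proj c v \<in> Part A"
  proof -
    have "\<forall>j. (proj c v)$j \<in> {0,1}"
    proof
      fix j show "(proj c v)$j \<in> {0,1}"
        using v01[rule_format, of "X j"] abc(3) by (auto simp: proj_def phi_def)
    qed
    moreover have "\<forall>r. sum (\<lambda>j. (proj c v)$j) {j. A$r$j = 1} = 1"
    proof
      fix r
      have "sum (\<lambda>j. (proj c v)$j) {j. A$r$j = 1} = 3*(1-c) + (2*c-1) * (2 - c)"
        using sum_phi[OF three_ones[rule_format, of r], of c "\<lambda>j. v$X j"] rs[of r]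
        by (simp add: proj_def)
      also have "\<dots> = 1" using abc(3) by auto
      finally show "sum (\<lambda>j. (proj c v)$j) {j. A$r$j = 1} = 1" .
    qed
    ultimately show ?thesis using Part_iff[OF zero_one] by blast
  qed
  moreover have "emb a b c (proj c v) = v"
  proof -
    have "emb a b c (proj c v) $ k = v $ k" for k
      by (cases k) (simp_all add: emb_def proj_def phi_invol[OF abc(3)] y xpe xbe)
    then show ?thesis by (simp add: vec_eq_iff)
  qed
  ultimately show ?thesis by blast
qed

lemma coord_le:
  assumes "a \<in> {0,1::real}" "t \<in> {0,1}"
  shows "(2*a-1)*t \<le> a \<and> ((2*a-1)*t = a \<longleftrightarrow> t = a)"
  using assms by auto

lemma face_F:
  fixes A :: "real ^ ('c::{finite,linorder}) ^ ('r::finite)"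
  assumes abc: "a \<in> {0,1}" "b = 1 - a" "c \<in> {0,1}"
  shows "convex hull (NPadj_sub A a b c) face_of convex hull (NPadj A)"
proof -
  have finN: "finite (NPadj A)" by (rule finite_subset[OF _ finite_01]) (auto simp: NPadj_def)
  define d :: "real^'c coord" where
    "d = (2*a-1) *\<^sub>R axis Y1 1 + (2*b-1) *\<^sub>R axis Y2 1 + (2*c-1) *\<^sub>R axis Y3 1"
  have dv: "inner d v = (2*a-1) * v$Y1 + (2*b-1) * v$Y2 + (2*c-1) * v$Y3" for v
    by (simp add: d_def inner_add_left inner_axis')
  have b01: "b \<in> {0,1}" using abc by auto
  have ineq: "inner d s \<le> a+b+c \<and> (inner d s = a+b+c \<longleftrightarrow> s$Y1 = a \<and> s$Y2 = b \<and> s$Y3 = c)"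
    if "s \<in> NPadj A" for s
  proof -
    have s01: "\<forall>k. s$k \<in> {0,1}" using that by (simp add: NPadj_def)
    have 1: "(2 * a - 1) * s$Y1 \<le> a \<and> ((2 * a - 1) * s$Y1 = a \<longleftrightarrow> s$Y1 = a)"
      using coord_le abc(1) s01 by blast
    have 2: "(2 * b - 1) * s$Y2 \<le> b \<and> ((2 * b - 1) * s$Y2 = b \<longleftrightarrow> s$Y2 = b)"
      using coord_le b01 s01 by blast
    have 3: "(2 * c - 1) * s$Y3 \<le> c \<and> ((2 * c - 1) * s$Y3 = c \<longleftrightarrow> s$Y3 = c)"
      using coord_le abc(3) s01 by blast
    show ?thesis unfolding dv using 1 2 3 by linarith
  qed
  have eqF: "{s\<in>NPadj A. inner d s = a+b+c} = NPadj_sub A a b c"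
    using ineq by (auto simp: NPadj_sub_def)
  show ?thesis using face_hyperplane[OF finN, of d "a+b+c"] ineq eqF by auto
qed

lemma each_case:
  fixes A :: "real ^ ('c::{finite,linorder}) ^ ('r::finite)"
  assumes zero_one: "\<forall>i j. A $ i $ j \<in> {0, 1}"
    and three_ones: "\<forall>i. card {j. A $ i $ j = 1} = 3"
    and abc: "a \<in> {0,1}" "b = 1 - a" "c \<in> {0,1}"
  shows "(\<exists>G. G face_of convex hull (NPadj A) \<and> {v. v extreme_point_of G} = NPadj_sub A a b c)
     \<and> aff_equiv (convex hull (NPadj_sub A a b c)) (convex hull (Part A))"
proof -
  let ?F = "NPadj_sub A a b c"
  have finN: "finite (NPadj A)" by (rule finite_subset[OF _ finite_01]) (auto simp: NPadj_def)
  have finF: "finite ?F" by (rule finite_subset[OF _ finN]) (auto simp: NPadj_sub_def)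
  have F01: "\<forall>v\<in>?F. \<forall>k. v$k \<in> {0,1}" by (auto simp: NPadj_sub_def NPadj_def)
  have part1: "\<exists>G. G face_of convex hull (NPadj A) \<and> {v. v extreme_point_of G} = ?F"
    using face_F[OF abc, of A] extreme_01[OF finF F01] by blast
  have gf: "\<forall>v\<in>?F. emb a b c (proj c v) = v"
    using proj_in[OF zero_one three_ones abc] by blast
  have inj: "inj_on (proj c) (convex hull ?F)"
    by (rule inj_on_hull[OF proj_affine emb_affine gf])
  have img: "proj c ` ?F = Part A"
  proof
    show "proj c ` ?F \<subseteq> Part A" using proj_in[OF zero_one three_ones abc] by blast
    show "Part A \<subseteq> proj c ` ?F"
    proof
      fix z assume "z \<in> Part A"
      then have "emb a b c z \<in> ?F" "proj c (emb a b c z) = z"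
        using emb_in[OF zero_one three_ones abc] proj_emb[OF abc(3)] by auto
      then show "z \<in> proj c ` ?F" by (metis image_eqI)
    qed
  qed
  have "proj c ` (convex hull ?F) = convex hull (Part A)"
    using affine_map_image_hull[OF proj_affine] img by metis
  then have "aff_equiv (convex hull ?F) (convex hull (Part A))"
    unfolding aff_equiv_def using inj proj_affine by blast
  then show ?thesis using part1 by blast
qed

theorem mainTheorem3:
  fixes A :: "real ^ ('c::{finite,linorder}) ^ ('r::finite)"
  assumes zero_one: "\<forall>i j. A $ i $ j \<in> {0, 1}"
    and three_ones: "\<forall>i. card {j. A $ i $ j = 1} = 3"
  shows "(\<forall>(a, b, c) \<in> {(0, 1, 1), (1, 0, 1), (0, 1, 0), (1, 0, 0)}.
            (\<exists>G. G face_of convex hull (NPadj A)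
                 \<and> {v. v extreme_point_of G} = NPadj_sub A a b c)
          \<and> aff_equiv (convex hull (NPadj_sub A a b c)) (convex hull (Part A)))
       \<and> aff_reduces (Part A) (NPadj A)"
proof
  show "\<forall>(a, b, c) \<in> {(0, 1, 1), (1, 0, 1), (0, 1, 0), (1, 0, 0)}.
            (\<exists>G. G face_of convex hull (NPadj A)
                 \<and> {v. v extreme_point_of G} = NPadj_sub A a b c)
          \<and> aff_equiv (convex hull (NPadj_sub A a b c)) (convex hull (Part A))"
    using each_case[OF zero_one three_ones, of 0 1 1] each_case[OF zero_one three_ones, of 1 0 1]
      each_case[OF zero_one three_ones, of 0 1 0] each_case[OF zero_one three_ones, of 1 0 0]
    by auto
next
  let ?F = "NPadj_sub A 0 1 1"
  have fg: "\<forall>z\<in>Part A. proj 1 (emb 0 1 1 z) = z" by (intro ballI proj_emb) simp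
  have inj: "inj_on (emb 0 1 1) (convex hull (Part A))"
    by (rule inj_on_hull[OF emb_affine proj_affine fg])
  have img: "emb 0 1 1 ` Part A = ?F"
  proof
    show "emb 0 1 1 ` Part A \<subseteq> ?F" using emb_in[OF zero_one three_ones, of 0 1 1] by auto
    show "?F \<subseteq> emb 0 1 1 ` Part A"
    proof
      fix v assume "v \<in> ?F"
      then have "proj 1 v \<in> Part A \<and> emb 0 1 1 (proj 1 v) = v"
        using proj_in[OF zero_one three_ones, of 0 1 1] by auto
      then show "v \<in> emb 0 1 1 ` Part A" by (metis image_eqI)
    qed
  qed
  have "emb 0 1 1 ` (convex hull (Part A)) = convex hull ?F"
    using affine_map_image_hull[OF emb_affine] img by metis
  moreover have "convex hull ?F face_of convex hull (NPadj A)"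
    using face_F[of 0 1 1 A] by auto
  ultimately show "aff_reduces (Part A) (NPadj A)"
    unfolding aff_reduces_def using inj emb_affine by metis
qed

end
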